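(* Let $1\le p<\infty$, $q=p(p-1)^{-1}$, $\beta\in\mathbb{R}$, let $r\in\mathbb{N}$, and let $\omega$ be a function of the modulus of continuity type. Suppose there is a constant $C$ such that for all integers $n\ge0$, $$\left\{\int_{0}^{\frac{\pi}{r(n+1)}}\left(\frac{\omega(t)}{t\sin^{\beta}\frac{rt}{2}}\right)^{q}dt\right\}^{1/q}\le C(n+1)^{\beta+1/p}\,\omega\!\left(\frac{\pi}{n+1}\right).$$ Then for every $m\in\{0,1,\dots,[r/2]\}$ there is a constant $C'$ such that for all $n\ge0$, $$\left\{\int_{\frac{2m\pi}{r}}^{\frac{2m\pi}{r}+\frac{\pi}{r(n+1)}}\left(\frac{\omega(t)}{t\left|\sin\frac{rt}{2}\right|^{\beta}}\right)^{q}dt\right\}^{1/q}\le C'(n+1)^{\beta+1/p}\,\omega\!\left(\frac{\pi}{n+1}\right).$$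
   Context: A function of the modulus of continuity type is a nondecreasing continuous function $\omega$ on $[0,2\pi]$ with $\omega(0)=0$ and $\omega(\delta_1+\delta_2)\le\omega(\delta_1)+\omega(\delta_2)$ whenever $0\le\delta_1\le\delta_2\le\delta_1+\delta_2\le2\pi$. $[y]$ is the integer part of $y$. When $p=1$ (so $q=\infty$), $\{\int g^q\}^{1/q}$ is read as the essential supremum of $g$. *)

theory Defs
  imports "HOL-Analysis.Analysis" "HOL-Probability.Essential_Supremum"
begin

definition modulus_cont_type :: "(real \<Rightarrow> real) \<Rightarrow> bool" where
  "modulus_cont_type \<omega> \<longleftrightarrow>
     mono_on {0..2*pi} \<omega> \<and> continuous_on {0..2*pi} \<omega> \<and> \<omega> 0 = 0 \<and>
     (\<forall>d1 d2. 0 \<le> d1 \<and> d1 \<le> d2 \<and> d1 + d2 \<le> 2*pi \<longrightarrow> \<omega> (d1 + d2) \<le> \<omega> d1 + \<omega> d2)"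

text \<open>The quantity (int_a^b g^q)^(1/q) with q = p/(p-1) for a nonnegative g,
  valued in the extended reals (infinite if the integral diverges);
  for p = 1 (q = infinity) it is the essential supremum of g on [a,b].\<close>
definition Lq_norm_on :: "real \<Rightarrow> real \<Rightarrow> real \<Rightarrow> (real \<Rightarrow> real) \<Rightarrow> ereal" where
  "Lq_norm_on p a b g =
     (if p = 1 then esssup (restrict_space lborel {a..b}) (\<lambda>t. ereal (g t))
      else (let q = p / (p - 1);
                I = (\<integral>\<^sup>+ t. ennreal (g t powr q) * indicator {a..b} t \<partial>lborel)
            in if I = \<infinity> then \<infinity> else ereal (enn2real I powr (1 / q))))"

end

theory Submission
  imports Defs
begin

lemma Lq_cong:
  assumes "\<And>x. a \<le> x \<Longrightarrow> x \<le> b \<Longrightarrow> F x = G x"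
  shows "Lq_norm_on p a b F = Lq_norm_on p a b G"
proof -
  have sp: "space (restrict_space lborel {a..b}) = {a..b}" by simp
  have e: "esssup (restrict_space lborel {a..b}) (\<lambda>t. ereal (F t)) =
           esssup (restrict_space lborel {a..b}) (\<lambda>t. ereal (G t))"
  proof -
    have m: "(\<lambda>t. ereal (F t)) \<in> borel_measurable (restrict_space lborel {a..b}) \<longleftrightarrow>
             (\<lambda>t. ereal (G t)) \<in> borel_measurable (restrict_space lborel {a..b})"
      by (rule measurable_cong) (simp add: assms)
    have "Limsup (ae_filter (restrict_space lborel {a..b})) (\<lambda>t. ereal (F t)) =
          Limsup (ae_filter (restrict_space lborel {a..b})) (\<lambda>t. ereal (G t))"
      by (rule Limsup_eq, rule AE_I2) (simp add: assms)
    then show ?thesis unfolding esssup_def using m by simp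
  qed
  have i: "(\<integral>\<^sup>+ t. ennreal (F t powr q) * indicator {a..b} t \<partial>lborel) =
           (\<integral>\<^sup>+ t. ennreal (G t powr q) * indicator {a..b} t \<partial>lborel)" for q
    by (rule nn_integral_cong) (auto simp: assms indicator_def)
  show ?thesis unfolding Lq_norm_on_def using e i by simp
qed

lemma transl:
  fixes f g :: "real \<Rightarrow> real"
  assumes p: "1 \<le> p" and K: "K > 0"
    and fm[measurable]: "f \<in> borel_measurable borel" and gm[measurable]: "g \<in> borel_measurable borel"
    and pt: "\<And>s. 0 \<le> s \<Longrightarrow> s \<le> h \<Longrightarrow> 0 \<le> g (t0 + s) \<and> g (t0 + s) \<le> K * f s"
  shows "Lq_norm_on p t0 (t0 + h) g \<le> ereal K * Lq_norm_on p 0 h f"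
proof (cases "p = 1")
  case True
  define S where "S = esssup (restrict_space lborel {0..h}) (\<lambda>t. ereal (f t))"
  have "AE s in restrict_space lborel {0..h}. ereal (f s) \<le> S"
    unfolding S_def by (rule esssup_AE)
  then have "AE s in lborel. s \<in> {0..h} \<longrightarrow> ereal (f s) \<le> S"
    by (subst (asm) AE_restrict_space_iff) auto
  then have "AE s in distr lborel borel ((+) (-t0)). s \<in> {0..h} \<longrightarrow> ereal (f s) \<le> S"
    unfolding lborel_distr_plus[of "-t0 :: real"] .
  then have "AE x in lborel. (-t0 + x) \<in> {0..h} \<longrightarrow> ereal (f (-t0 + x)) \<le> S"
    by (rule AE_distrD[rotated]) simp
  then have "AE x in lborel. x \<in> {t0..t0+h} \<longrightarrow> ereal (g x) \<le> ereal K * S"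
  proof (rule eventually_mono)
    fix x assume H: "- t0 + x \<in> {0..h} \<longrightarrow> ereal (f (- t0 + x)) \<le> S"
    show "x \<in> {t0..t0+h} \<longrightarrow> ereal (g x) \<le> ereal K * S"
    proof
      assume x: "x \<in> {t0..t0+h}"
      then have "- t0 + x \<in> {0..h}" by auto
      with H have fS: "ereal (f (- t0 + x)) \<le> S" by auto
      from pt[of "-t0 + x"] x have "g x \<le> K * f (-t0 + x)" by auto
      then have "ereal (g x) \<le> ereal K * ereal (f (-t0 + x))" by simp
      also have "\<dots> \<le> ereal K * S" using fS K by (intro ereal_mult_left_mono) auto
      finally show "ereal (g x) \<le> ereal K * S" .
    qed
  qed
  then have "AE x in restrict_space lborel {t0..t0+h}. ereal (g x) \<le> ereal K * S"
    by (subst AE_restrict_space_iff) auto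
  then have "esssup (restrict_space lborel {t0..t0+h}) (\<lambda>t. ereal (g t)) \<le> ereal K * S"
    by (intro esssup_I) (auto intro: measurable_restrict_space1)
  then show ?thesis using True by (simp add: Lq_norm_on_def S_def)
next
  case False
  then have p1: "p > 1" using p by simp
  define q where "q = p / (p - 1)"
  have q: "q > 0" using p1 by (simp add: q_def)
  define Ig where "Ig = (\<integral>\<^sup>+ t. ennreal (g t powr q) * indicator {t0..t0+h} t \<partial>lborel)"
  define If where "If = (\<integral>\<^sup>+ t. ennreal (f t powr q) * indicator {0..h} t \<partial>lborel)"
  define F where "F = (\<lambda>s. ennreal (f s powr q) * indicator {0..h} s)"
  have Fm[measurable]: "F \<in> borel_measurable borel" unfolding F_def by measurable
  have "Ig \<le> (\<integral>\<^sup>+ t. ennreal (K powr q) * F (t - t0) \<partial>lborel)"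
    unfolding Ig_def
  proof (rule nn_integral_mono)
    fix t
    show "ennreal (g t powr q) * indicator {t0..t0+h} t \<le> ennreal (K powr q) * F (t - t0)"
    proof (cases "t \<in> {t0..t0+h}")
      case True
      then have "0 \<le> t - t0" "t - t0 \<le> h" by auto
      from pt[OF this] have g0: "0 \<le> g t" and gK: "g t \<le> K * f (t - t0)" by auto
      have f0: "0 \<le> f (t - t0)" using g0 gK K by (smt (verit) mult_pos_neg)
      have "g t powr q \<le> (K * f (t - t0)) powr q" using g0 gK q by (intro powr_mono2) auto
      also have "\<dots> = K powr q * f (t - t0) powr q" using K f0 by (simp add: powr_mult)
      finally have "g t powr q \<le> K powr q * f (t - t0) powr q" .
      then show ?thesis using True q f0 K
        by (simp add: F_def indicator_def ennreal_mult[symmetric] ennreal_leI)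
    qed (auto simp: indicator_def)
  qed
  also have "\<dots> = ennreal (K powr q) * (\<integral>\<^sup>+ t. F (t - t0) \<partial>lborel)"
    by (rule nn_integral_cmult) measurable
  also have "(\<integral>\<^sup>+ t. F (t - t0) \<partial>lborel) = If"
  proof -
    have "(\<integral>\<^sup>+ t. F (t - t0) \<partial>lborel) = ennreal \<bar>1::real\<bar> * (\<integral>\<^sup>+ x. F (t0 + 1 * x - t0) \<partial>lborel)"
      by (rule nn_integral_real_affine[where f="\<lambda>t. F (t - t0)"]) auto
    then show ?thesis by (simp add: If_def F_def)
  qed
  finally have IgIf: "Ig \<le> ennreal (K powr q) * If" .
  have L: "Lq_norm_on p t0 (t0+h) g = (if Ig = \<infinity> then \<infinity> else ereal (enn2real Ig powr (1/q)))"
    unfolding Lq_norm_on_def Ig_def q_def Let_def using False by simp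
  have R: "Lq_norm_on p 0 h f = (if If = \<infinity> then \<infinity> else ereal (enn2real If powr (1/q)))"
    unfolding Lq_norm_on_def If_def q_def Let_def using False by simp
  show ?thesis
  proof (cases "If = \<infinity>")
    case True
    then show ?thesis unfolding L R using K by simp
  next
    case fin: False
    have lt: "ennreal (K powr q) * If < top" using fin
      by (simp add: ennreal_mult_less_top top.not_eq_extremum)
    then have Igf: "Ig \<noteq> \<infinity>" using IgIf
      using le_less_trans by fastforce
    have "enn2real Ig \<le> enn2real (ennreal (K powr q) * If)"
      using IgIf lt by (intro enn2real_mono) auto
    also have "\<dots> = K powr q * enn2real If" by (simp add: enn2real_mult)
    finally have "enn2real Ig \<le> K powr q * enn2real If" .
    then have "enn2real Ig powr (1/q) \<le> (K powr q * enn2real If) powr (1/q)"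
      using q by (intro powr_mono2) auto
    also have "\<dots> = K * enn2real If powr (1/q)"
      using K q by (simp add: powr_mult powr_powr)
    finally show ?thesis unfolding L R using fin Igf by simp
  qed
qed

lemma mct_facts:
  assumes "modulus_cont_type \<omega>"
  shows "mono_on {0..2*pi} \<omega>" "continuous_on {0..2*pi} \<omega>" "\<omega> 0 = 0"
    "\<And>d1 d2. 0 \<le> d1 \<Longrightarrow> d1 \<le> d2 \<Longrightarrow> d1 + d2 \<le> 2*pi \<Longrightarrow> \<omega> (d1 + d2) \<le> \<omega> d1 + \<omega> d2"
  using assms unfolding modulus_cont_type_def by blast+

lemma mct_mono:
  assumes "modulus_cont_type \<omega>" "0 \<le> x" "x \<le> y" "y \<le> 2*pi"
  shows "\<omega> x \<le> \<omega> y"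
proof (rule mono_onD[OF mct_facts(1)[OF assms(1)]])
  show "x \<in> {0..2*pi}" using assms(2-4) by simp
  show "y \<in> {0..2*pi}" using assms(2-4) by simp
qed (rule assms(3))

lemma mct_nonneg:
  assumes "modulus_cont_type \<omega>" "0 \<le> x" "x \<le> 2*pi"
  shows "0 \<le> \<omega> x"
  using mct_mono[OF assms(1) order_refl assms(2)] assms(2,3) mct_facts(3)[OF assms(1)] by simp

lemma mct_mult:
  assumes "modulus_cont_type \<omega>" "s > 0"
  shows "real k * s \<le> 2*pi \<Longrightarrow> \<omega> (real k * s) \<le> real k * \<omega> s"
proof (induction k)
  case 0
  then show ?case using mct_facts(3)[OF assms(1)] by simp
next
  case (Suc k)
  show ?case
  proof (cases "k = 0")
    case True
    then show ?thesis by simp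
  next
    case False
    then have k1: "real k \<ge> 1" by simp
    have ks: "s \<le> real k * s" using k1 assms(2) by simp
    have "real (Suc k) * s = s + real k * s" by (simp add: algebra_simps)
    then have "\<omega> (real (Suc k) * s) = \<omega> (s + real k * s)" by simp
    also have "\<dots> \<le> \<omega> s + \<omega> (real k * s)"
      using Suc.prems ks assms(2) \<open>real (Suc k) * s = s + real k * s\<close>
      by (intro mct_facts(4)[OF assms(1)]) auto
    also have "\<omega> (real k * s) \<le> real k * \<omega> s"
      using Suc.prems assms(2) by (intro Suc.IH) (simp add: algebra_simps)
    finally show ?thesis by (simp add: algebra_simps)
  qed
qed

lemma mct_2pi:
  assumes "modulus_cont_type \<omega>" "s > 0" "s \<le> 2*pi"
  shows "\<omega> (2*pi) * s \<le> 4 * pi * \<omega> s"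
proof -
  define k where "k = nat \<lfloor>2*pi/s\<rfloor>"
  have q1: "2*pi/s \<ge> 1" using assms by simp
  have fl: "(1::int) \<le> \<lfloor>2*pi/s\<rfloor>" using q1 by (simp add: le_floor_iff)
  have kr: "real k = real_of_int \<lfloor>2*pi/s\<rfloor>" unfolding k_def using fl by simp
  have kle: "real k \<le> 2*pi/s" unfolding kr by (rule of_int_floor_le)
  have kgt: "2*pi/s < real k + 1" unfolding kr by (rule real_of_int_floor_add_one_gt)
  have k1: "real k \<ge> 1" unfolding kr using fl by simp
  have ks: "real k * s \<le> 2*pi" using kle assms(2) by (simp add: field_simps)
  have ks2: "2*pi < real k * s + s" using kgt assms(2) by (simp add: field_simps)
  define d where "d = 2*pi - real k * s"
  have d0: "0 \<le> d" "d \<le> s" using ks ks2 by (auto simp: d_def)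
  have sks: "s \<le> real k * s" using k1 assms(2) by simp
  have dks: "d \<le> real k * s" using d0 sks by linarith
  have "\<omega> (2*pi) = \<omega> (d + real k * s)" by (simp add: d_def)
  also have "\<dots> \<le> \<omega> d + \<omega> (real k * s)"
    using d0 dks ks by (intro mct_facts(4)[OF assms(1)]) (simp_all add: d_def)
  also have "\<omega> d \<le> \<omega> s" using d0 assms by (intro mct_mono[OF assms(1)]) auto
  also have "\<omega> (real k * s) \<le> real k * \<omega> s" using mct_mult[OF assms(1,2) ks] .
  finally have "\<omega> (2*pi) \<le> (real k + 1) * \<omega> s" by (simp add: algebra_simps)
  then have "\<omega> (2*pi) * s \<le> ((real k + 1) * \<omega> s) * s"
    using assms(2) by (intro mult_right_mono) auto
  also have "\<dots> = (real k + 1) * s * \<omega> s" by simp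
  also have "\<dots> \<le> 4 * pi * \<omega> s"
    using mct_nonneg[OF assms(1), of s] assms ks pi_gt_zero
    by (intro mult_right_mono) (auto simp: algebra_simps)
  finally show ?thesis .
qed

lemma pointwise:
  fixes r m :: nat and s \<beta> :: real
  assumes mc: "modulus_cont_type \<omega>" and r: "r \<ge> 1" and m: "m \<le> r div 2"
    and s0: "0 \<le> s" and sh: "s \<le> pi / r"
  shows "0 \<le> \<omega> (2*m*pi/r + s) / ((2*m*pi/r + s) * abs (sin (r*(2*m*pi/r + s)/2)) powr \<beta>)
    \<and> \<omega> (2*m*pi/r + s) / ((2*m*pi/r + s) * abs (sin (r*(2*m*pi/r + s)/2)) powr \<beta>)
       \<le> 4*r * (\<omega> s / (s * sin (r * s / 2) powr \<beta>))"
proof -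
  define t0 where "t0 = 2*m*pi/r"
  define t where "t = t0 + s"
  define x where "x = r * s / 2"
  have rpos: "real r > 0" using r by simp
  have m2: "2 * real m \<le> real r" using m by linarith
  have t00: "0 \<le> t0" unfolding t0_def by simp
  have t0pi: "t0 \<le> pi" unfolding t0_def using m2 rpos by (simp add: field_simps)
  have pir: "pi / r \<le> pi" using r by (simp add: field_simps)
  have spi: "s \<le> pi" using sh pir by linarith
  have t2pi: "t \<le> 2*pi" unfolding t_def using t0pi spi by linarith
  have x0: "0 \<le> x" "x \<le> pi/2" unfolding x_def using s0 sh rpos by (auto simp: field_simps)
  have e: "r*t/2 = real m * pi + x" unfolding t_def t0_def x_def using rpos by (simp add: field_simps)
  have "sin (r*t/2) = sin (real m * pi + x)" by (simp only: e)
  also have "\<dots> = (-1)^m * sin x" by (simp add: sin_add)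
  finally have "sin (r*t/2) = (-1)^m * sin x" .
  then have sabs: "\<bar>sin (r*t/2)\<bar> = sin x" using x0 by (simp add: abs_mult sin_ge_zero)
  have goal: "0 \<le> \<omega> t / (t * sin x powr \<beta>) \<and> \<omega> t / (t * sin x powr \<beta>) \<le> 4*r * (\<omega> s / (s * sin x powr \<beta>))"
  proof (cases "s = 0")
    case True
    then show ?thesis by (simp add: x_def)
  next
    case False
    then have spos: "s > 0" using s0 by simp
    then have xpos: "x > 0" unfolding x_def using rpos by simp
    have sinx: "sin x > 0" using xpos x0 by (intro sin_gt_zero) auto
    define P where "P = sin x powr \<beta>"
    have P: "P > 0" unfolding P_def using sinx by simp
    have tpos: "t > 0" unfolding t_def using t00 spos by simp
    have wt: "0 \<le> \<omega> t" using mct_nonneg[OF mc] tpos t2pi by simp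
    have ws: "0 \<le> \<omega> s" using mct_nonneg[OF mc] s0 spi by simp
    have A: "\<omega> t / t \<le> 4*r * (\<omega> s / s)"
    proof (cases "m = 0")
      case True
      then have "t = s" unfolding t_def t0_def by simp
      moreover have "0 \<le> \<omega> s / s" using ws spos by simp
      moreover have "1 * (\<omega> s / s) \<le> (4 * real r) * (\<omega> s / s)"
        using r \<open>0 \<le> \<omega> s / s\<close> by (intro mult_right_mono) auto
      ultimately show ?thesis by simp
    next
      case False
      then have "t0 \<ge> 2*pi/r" unfolding t0_def using rpos by (simp add: field_simps)
      then have tge: "t \<ge> 2*pi/r" unfolding t_def using s0 by simp
      have w2: "\<omega> t \<le> \<omega> (2*pi)" using mct_mono[OF mc] tpos t2pi by simp
      have w20: "0 \<le> \<omega> (2*pi)" using mct_nonneg[OF mc] by simp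
      have "\<omega> t / t \<le> \<omega> (2*pi) / t" using w2 tpos by (simp add: divide_right_mono)
      also have "\<dots> \<le> \<omega> (2*pi) / (2*pi/r)" using tge w20 rpos tpos
        by (intro divide_left_mono) auto
      also have "\<dots> = (\<omega> (2*pi) * s) * r / (2*pi * s)" using spos by (simp add: field_simps)
      also have "\<dots> \<le> (4*pi*\<omega> s) * r / (2*pi * s)"
        using mct_2pi[OF mc spos] spi spos by (intro divide_right_mono mult_right_mono) auto
      also have "\<dots> = 2 * r * (\<omega> s / s)" using spos by (simp add: field_simps)
      also have "\<dots> \<le> 4 * r * (\<omega> s / s)" using ws spos by (intro mult_right_mono) auto
      finally show ?thesis .
    qed
    have "\<omega> t / (t * P) = (\<omega> t / t) / P" by simp
    also have "\<dots> \<le> (4*r * (\<omega> s / s)) / P" using P by (intro divide_right_mono A) simp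
    also have "\<dots> = 4*r * (\<omega> s / (s * P))" by simp
    finally have "\<omega> t / (t * P) \<le> 4*r * (\<omega> s / (s * P))" .
    moreover have "0 \<le> \<omega> t / (t * P)" using wt tpos P by simp
    ultimately show ?thesis unfolding P_def by simp
  qed
  then show ?thesis unfolding t_def t0_def[symmetric] using sabs
    by (simp add: t_def x_def)
qed

theorem lemma7:
  fixes p \<beta> :: real and r :: nat and \<omega> :: "real \<Rightarrow> real"
  assumes "1 \<le> p"
    and "r \<ge> 1"
    and "modulus_cont_type \<omega>"
    and "\<exists>C. \<forall>n::nat.
           Lq_norm_on p 0 (pi / (r * (n + 1)))
             (\<lambda>t. \<omega> t / (t * sin (r * t / 2) powr \<beta>))
           \<le> ereal (C * (real n + 1) powr (\<beta> + 1 / p) * \<omega> (pi / (real n + 1)))"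
  shows "\<forall>m::nat. m \<le> r div 2 \<longrightarrow>
           (\<exists>C'. \<forall>n::nat.
              Lq_norm_on p (2 * m * pi / r) (2 * m * pi / r + pi / (r * (n + 1)))
                (\<lambda>t. \<omega> t / (t * \<bar>sin (r * t / 2)\<bar> powr \<beta>))
              \<le> ereal (C' * (real n + 1) powr (\<beta> + 1 / p) * \<omega> (pi / (real n + 1))))"
proof -
  define f where "f = (\<lambda>t::real. \<omega> t / (t * sin (r * t / 2) powr \<beta>))"
  define g where "g = (\<lambda>t::real. \<omega> t / (t * \<bar>sin (r * t / 2)\<bar> powr \<beta>))"
  obtain C where C: "\<And>n::nat. Lq_norm_on p 0 (pi / (r * (n + 1))) f
           \<le> ereal (C * (real n + 1) powr (\<beta> + 1 / p) * \<omega> (pi / (real n + 1)))"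
    using assms(4) unfolding f_def by blast
  define w' where "w' = (\<lambda>x. \<omega> (max 0 (min (2*pi) x)))"
  have cl: "continuous_on UNIV (\<lambda>x::real. max 0 (min (2*pi) x))"
    by (intro continuous_intros)
  have wc: "continuous_on UNIV w'" unfolding w'_def
    by (rule continuous_on_compose2[OF mct_facts(2)[OF assms(3)] cl]) auto
  have wm[measurable]: "w' \<in> borel_measurable borel"
    by (rule borel_measurable_continuous_onI[OF wc])
  have weq: "\<And>x. 0 \<le> x \<Longrightarrow> x \<le> 2*pi \<Longrightarrow> w' x = \<omega> x"
    unfolding w'_def by simp
  define f' where "f' = (\<lambda>t::real. w' t / (t * sin (r * t / 2) powr \<beta>))"
  define g' where "g' = (\<lambda>t::real. w' t / (t * \<bar>sin (r * t / 2)\<bar> powr \<beta>))"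
  have fm: "f' \<in> borel_measurable borel" unfolding f'_def by measurable
  have gm: "g' \<in> borel_measurable borel" unfolding g'_def by measurable
  have rpos: "real r > 0" using assms(2) by simp
  have pir: "pi / real r \<le> pi" using assms(2) by (simp add: field_simps)
  show ?thesis
  proof (intro allI impI)
    fix m :: nat assume m: "m \<le> r div 2"
    have m2: "2 * real m \<le> real r" using m using pi_gt_zero by linarith
    define t0 where "t0 = real (2*m) * pi / real r"
    have t00: "0 \<le> t0" unfolding t0_def by simp
    have t0pi: "t0 \<le> pi" unfolding t0_def using m2 rpos by (simp add: field_simps)
    have "\<forall>n::nat. Lq_norm_on p t0 (t0 + pi / (r * (n + 1))) g
        \<le> ereal ((real (4*r) * C) * (real n + 1) powr (\<beta> + 1 / p) * \<omega> (pi / (real n + 1)))"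
    proof
      fix n :: nat
      define h where "h = pi / real (r * (n + 1))"
      have h0: "0 \<le> h" unfolding h_def by simp
      have rr: "real r \<le> real (r * (n + 1))" by simp
      have "0 < r * (n + 1)" using assms(2) by simp
      then have rp0: "0 < real (r * (n + 1))" by (simp only: of_nat_0_less_iff)
      have rp: "0 < real (r * (n + 1)) * real r" using rp0 rpos by (rule mult_pos_pos)
      have hr: "h \<le> pi / real r" unfolding h_def
        by (rule divide_left_mono[OF rr _ rp]) simp
      have "Lq_norm_on p t0 (t0 + h) g = Lq_norm_on p t0 (t0 + h) g'"
      proof (rule Lq_cong)
        fix x assume "t0 \<le> x" "x \<le> t0 + h"
        then have "0 \<le> x" "x \<le> 2*pi" using t00 t0pi hr pir using pi_gt_zero by linarith+
        then show "g x = g' x" unfolding g_def g'_def using weq by simp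
      qed
      also have "\<dots> \<le> ereal (real (4*r)) * Lq_norm_on p 0 h f'"
      proof (rule transl[OF assms(1) _ fm gm])
        show "0 < real (4*r)" using rpos by simp
        fix s assume s: "0 \<le> s" "s \<le> h"
        have sh: "s \<le> pi / real r" using s hr using pi_gt_zero by linarith
        have "t0 + s \<le> 2*pi" using t0pi s hr pir using pi_gt_zero by linarith
        then have e1: "g' (t0 + s) = g (t0 + s)" unfolding g_def g'_def using weq t00 s by simp
        have "s \<le> 2*pi" using sh pir using pi_gt_zero by linarith
        then have e2: "f' s = f s" unfolding f_def f'_def using weq s by simp
        show "0 \<le> g' (t0 + s) \<and> g' (t0 + s) \<le> real (4*r) * f' s"
          unfolding e1 e2 unfolding g_def f_def t0_def
          using pointwise[OF assms(3) assms(2) m s(1) sh, of \<beta>] by simp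
      qed
      also have "Lq_norm_on p 0 h f' = Lq_norm_on p 0 h f"
      proof (rule Lq_cong)
        fix x assume "0 \<le> x" "x \<le> h"
        then have "0 \<le> x" "x \<le> 2*pi" using hr pir using pi_gt_zero by linarith+
        then show "f' x = f x" unfolding f_def f'_def using weq by simp
      qed
      also have "ereal (real (4*r)) * Lq_norm_on p 0 h f
          \<le> ereal (real (4*r)) * ereal (C * (real n + 1) powr (\<beta> + 1 / p) * \<omega> (pi / (real n + 1)))"
        using C[of n] unfolding h_def by (intro ereal_mult_left_mono) auto
      also have "\<dots> = ereal ((real (4*r) * C) * (real n + 1) powr (\<beta> + 1 / p) * \<omega> (pi / (real n + 1)))"
        by (simp add: algebra_simps)
      finally show "Lq_norm_on p t0 (t0 + pi / (r * (n + 1))) g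
        \<le> ereal ((real (4*r) * C) * (real n + 1) powr (\<beta> + 1 / p) * \<omega> (pi / (real n + 1)))"
        unfolding h_def .
    qed
    then show "\<exists>C'. \<forall>n::nat.
              Lq_norm_on p (2 * m * pi / r) (2 * m * pi / r + pi / (r * (n + 1)))
                (\<lambda>t. \<omega> t / (t * \<bar>sin (r * t / 2)\<bar> powr \<beta>))
              \<le> ereal (C' * (real n + 1) powr (\<beta> + 1 / p) * \<omega> (pi / (real n + 1)))"
      unfolding t0_def g_def by blast
  qed
qed

end
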